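(* Let $D=(V,E;s,t)$, $N$ be as in the context, let $x\in\mathcal{C}(\widetilde\Gamma_D)$ and let $e\in N$. If there exists a maximum-cardinality family of $s$-$t$ paths pairwise disjoint on $N$ none of whose paths contains $e$, then $x(e)=0$.
   Context: $D=(V,E;s,t)$ is a directed network with unit arc capacities (parallel arcs allowed); $N\subseteq E$ is the set of private arcs (players), $M=E\setminus N$ public arcs; every $s$-$t$ path contains an arc of $N$ and every arc lies on some $s$-$t$ path. Two paths are disjoint on $N$ if they share no arc of $N$; $\sigma_N$ is the maximum number of $s$-$t$ paths pairwise disjoint on $N$. For $S\subseteq N$, $\gamma(S)$ is the maximum number of pairwise arc-disjoint $s$-$t$ paths in $D_S=(V,S\cup M;s,t)$. The auxiliary game $\widetilde\Gamma_D=(N,\tilde\gamma)$ has $\tilde\gamma(N)=\sigma_N$ and $\tilde\gamma(S)=\gamma(S)$ for $S\subsetneq N$; its core is $\mathcal{C}(\widetilde\Gamma_D)=\{x\in\mathbb{R}^N_{\ge0}:x(N)=\sigma_N,\ x(S)\ge\tilde\gamma(S)\ \forall S\subseteq N\}$, with $x(S)=\sum_{i\in S}x_i$. *)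

theory Defs
  imports Complex_Main
begin

text \<open>A directed multigraph is given by a finite arc set E of an arbitrary type 'e
  together with tail map src and head map dst (parallel arcs allowed).\<close>

definition st_path :: "('e \<Rightarrow> 'v) \<Rightarrow> ('e \<Rightarrow> 'v) \<Rightarrow> 'e set \<Rightarrow> 'v \<Rightarrow> 'v \<Rightarrow> 'e list \<Rightarrow> bool" where
  "st_path src dst A s t p \<longleftrightarrow>
     p \<noteq> [] \<and> set p \<subseteq> A \<and> src (p ! 0) = s \<and> dst (last p) = t \<and>
     (\<forall>i. Suc i < length p \<longrightarrow> dst (p ! i) = src (p ! Suc i)) \<and>
     distinct (s # map dst p)"

definition disjoint_on :: "'e set \<Rightarrow> 'e list set \<Rightarrow> bool" where
  "disjoint_on F P \<longleftrightarrow> (\<forall>p\<in>P. \<forall>q\<in>P. p \<noteq> q \<longrightarrow> set p \<inter> set q \<inter> F = {})"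

definition sigmaN :: "('e \<Rightarrow> 'v) \<Rightarrow> ('e \<Rightarrow> 'v) \<Rightarrow> 'e set \<Rightarrow> 'e set \<Rightarrow> 'v \<Rightarrow> 'v \<Rightarrow> nat" where
  "sigmaN src dst E N s t =
     Max {card P | P. finite P \<and> (\<forall>p\<in>P. st_path src dst E s t p) \<and> disjoint_on N P}"

definition gammaS :: "('e \<Rightarrow> 'v) \<Rightarrow> ('e \<Rightarrow> 'v) \<Rightarrow> 'e set \<Rightarrow> 'e set \<Rightarrow> 'v \<Rightarrow> 'v \<Rightarrow> 'e set \<Rightarrow> nat" where
  "gammaS src dst E N s t S =
     Max {card P | P. finite P \<and> (\<forall>p\<in>P. st_path src dst (S \<union> (E - N)) s t p) \<and> disjoint_on E P}"

definition gamma_tilde :: "('e \<Rightarrow> 'v) \<Rightarrow> ('e \<Rightarrow> 'v) \<Rightarrow> 'e set \<Rightarrow> 'e set \<Rightarrow> 'v \<Rightarrow> 'v \<Rightarrow> 'e set \<Rightarrow> nat" where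
  "gamma_tilde src dst E N s t S =
     (if S = N then sigmaN src dst E N s t else gammaS src dst E N s t S)"

text \<open>Core of the auxiliary game; allocations are functions on arcs, only values on N matter.\<close>
definition core_tilde :: "('e \<Rightarrow> 'v) \<Rightarrow> ('e \<Rightarrow> 'v) \<Rightarrow> 'e set \<Rightarrow> 'e set \<Rightarrow> 'v \<Rightarrow> 'v \<Rightarrow> ('e \<Rightarrow> real) set" where
  "core_tilde src dst E N s t =
     {x. (\<forall>i\<in>N. 0 \<le> x i) \<and> sum x N = real (sigmaN src dst E N s t) \<and>
         (\<forall>S. S \<subseteq> N \<longrightarrow> real (gamma_tilde src dst E N s t S) \<le> sum x S)}"

end

theory Submission
  imports Defs
begin

lemma gammaS_ge1:
  assumes fV: "finite V" and fE: "finite E" and inV: "\<forall>a\<in>E. src a \<in> V \<and> dst a \<in> V"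
    and NE: "N \<subseteq> E" and SN: "S \<subseteq> N"
    and p: "st_path src dst (S \<union> (E - N)) s t p"
  shows "1 \<le> gammaS src dst E N s t S"
proof -
  let ?Q = "{p. set p \<subseteq> E \<and> length p \<le> card V}"
  have fQ: "finite ?Q" using fE by (rule finite_lists_length_le)
  have sub: "q \<in> ?Q" if "st_path src dst (S \<union> (E - N)) s t q" for q
  proof -
    have sE: "set q \<subseteq> E" using that NE SN unfolding st_path_def by auto
    have d: "distinct (map dst q)" using that unfolding st_path_def by auto
    have "set (map dst q) \<subseteq> V" using sE inV by auto
    hence "card (set (map dst q)) \<le> card V" using fV by (simp add: card_mono)
    hence "length q \<le> card V" using distinct_card[OF d] by simp
    thus ?thesis using sE by simp
  qed
  let ?C = "{card P | P. finite P \<and> (\<forall>p\<in>P. st_path src dst (S \<union> (E - N)) s t p) \<and> disjoint_on E P}"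
  have "?C \<subseteq> {..card ?Q}"
  proof
    fix c assume "c \<in> ?C"
    then obtain P where c: "c = card P" and P: "\<forall>p\<in>P. st_path src dst (S \<union> (E - N)) s t p" by auto
    have "P \<subseteq> ?Q" using P sub by blast
    hence "card P \<le> card ?Q" using fQ by (simp add: card_mono)
    thus "c \<in> {..card ?Q}" using c by simp
  qed
  hence fC: "finite ?C" by (rule finite_subset) simp
  have "card {p} \<in> ?C" using p unfolding disjoint_on_def by blast
  hence "card {p} \<le> Max ?C" using fC by (rule Max_ge[rotated])
  thus ?thesis unfolding gammaS_def by simp
qed

theorem lemma7:
  fixes V :: "'v set" and E N :: "'e set" and src dst :: "'e \<Rightarrow> 'v"
    and s t :: 'v and x :: "'e \<Rightarrow> real" and e :: 'e
  assumes "finite V" and "finite E"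
    and "\<forall>a\<in>E. src a \<in> V \<and> dst a \<in> V"
    and "s \<in> V" and "t \<in> V" and "s \<noteq> t"
    and "N \<subseteq> E"
    and "\<forall>p. st_path src dst E s t p \<longrightarrow> set p \<inter> N \<noteq> {}"
    and "\<forall>a\<in>E. \<exists>p. st_path src dst E s t p \<and> a \<in> set p"
    and "x \<in> core_tilde src dst E N s t"
    and "e \<in> N"
    and "\<exists>P. finite P \<and> (\<forall>p\<in>P. st_path src dst E s t p) \<and> disjoint_on N P
              \<and> card P = sigmaN src dst E N s t \<and> (\<forall>p\<in>P. e \<notin> set p)"
  shows "x e = 0"
proof -
  obtain P where fP: "finite P" and Pp: "\<forall>p\<in>P. st_path src dst E s t p"
    and dj: "disjoint_on N P" and cP: "card P = sigmaN src dst E N s t"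
    and ne: "\<forall>p\<in>P. e \<notin> set p" using assms(12) by blast
  have nn: "\<forall>i\<in>N. 0 \<le> x i" and sN: "sum x N = real (sigmaN src dst E N s t)"
    and cs: "\<forall>S. S \<subseteq> N \<longrightarrow> real (gamma_tilde src dst E N s t S) \<le> sum x S"
    using assms(10) unfolding core_tilde_def by auto
  have fN: "finite N" using assms(2,7) finite_subset by blast
  have each: "1 \<le> sum x (set p \<inter> N)" if pP: "p \<in> P" for p
  proof -
    have sp: "st_path src dst E s t p" using Pp pP by blast
    have neq: "set p \<inter> N \<noteq> N" using ne pP assms(11) by blast
    have "st_path src dst ((set p \<inter> N) \<union> (E - N)) s t p"
      using sp unfolding st_path_def by auto
    hence "1 \<le> gammaS src dst E N s t (set p \<inter> N)"
      using gammaS_ge1[OF assms(1,2,3,7)] by blast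
    moreover have "real (gamma_tilde src dst E N s t (set p \<inter> N)) \<le> sum x (set p \<inter> N)"
      using cs by blast
    ultimately show ?thesis using neq unfolding gamma_tilde_def by simp
  qed
  let ?U = "\<Union>p\<in>P. set p \<inter> N"
  have "sum x ?U = (\<Sum>p\<in>P. sum x (set p \<inter> N))"
    by (rule sum.UNION_disjoint) (use fP fN dj in \<open>auto simp: disjoint_on_def\<close>)
  also have "\<dots> \<ge> (\<Sum>p\<in>P. 1)" by (rule sum_mono) (use each in auto)
  finally have U: "sum x ?U \<ge> real (card P)" by simp
  have UN: "?U \<subseteq> N" by auto
  have eU: "e \<in> N - ?U" using ne assms(11) by auto
  have "sum x N = sum x ?U + sum x (N - ?U)"
    using fN UN by (metis add.commute sum.subset_diff)
  moreover have "sum x (N - ?U) \<ge> x e"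
  proof -
    have "sum x (N - ?U) = x e + sum x (N - ?U - {e})"
      using eU fN by (simp add: sum.remove)
    moreover have "sum x (N - ?U - {e}) \<ge> 0" using nn by (intro sum_nonneg) auto
    ultimately show ?thesis by simp
  qed
  ultimately have "x e \<le> 0" using U cP sN by linarith
  thus ?thesis using nn assms(11) by force
qed

end
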